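(* Let $f,g:\mathbb{R}^n\to\mathbb{R}$ satisfy assumptions (A1)–(A4) below, let $x_0\in\Omega=\{x:g(x)\le 0\}$, and suppose the bounded feasible set $\Omega_{f(x_0)}=\{x: f(x)\le f(x_0),\ g(x)\le 0\}$ is non-empty. Then for $\zeta\in[0,1]$ the vector field $\mathbf{s}_\zeta(x)=-\frac{\nabla f(x)}{|\nabla f(x)|}-\zeta\frac{\nabla g(x)}{|\nabla g(x)|}$ is Lipschitz continuous on $\Omega_{f(x_0)}$, i.e. there is a constant $L>0$ with $|\mathbf{s}_\zeta(x)-\mathbf{s}_\zeta(y)|\le L|x-y|$ for all $x,y\in\Omega_{f(x_0)}$.
   Context: Assumptions: (A1) $\lim_{|x|\to\infty} f(x)=+\infty$; (A2) $\nabla f(x)\neq 0$ for all $x\in\Omega$; (A3) $\nabla g(x)\neq 0$ for all $x\in\Omega$; (A4) $f$ and $g$ are twice continuously differentiable. $|\cdot|$ denotes the Euclidean norm. *)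

theory Defs
  imports "HOL-Analysis.Analysis"
begin

definition feasible_sublevel :: "('a \<Rightarrow> real) \<Rightarrow> ('a \<Rightarrow> real) \<Rightarrow> real \<Rightarrow> 'a set" where
  "feasible_sublevel f g c = {x. f x \<le> c \<and> g x \<le> 0}"

definition s_field :: "('a \<Rightarrow> 'a::real_normed_vector) \<Rightarrow> ('a \<Rightarrow> 'a) \<Rightarrow> real \<Rightarrow> 'a \<Rightarrow> 'a" where
  "s_field Df Dg \<zeta> x = - (Df x /\<^sub>R norm (Df x)) - \<zeta> *\<^sub>R (Dg x /\<^sub>R norm (Dg x))"

end

theory Submission imports Defs begin
lemma normalize_lip:
  fixes a b :: "'a::real_normed_vector"
  assumes "a \<noteq> 0" "b \<noteq> 0"
  shows "norm (a /\<^sub>R norm a - b /\<^sub>R norm b) \<le> 2 * norm (a - b) / norm a"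
proof -
  have na: "norm a > 0" "norm b > 0" using assms by auto
  have eq: "a /\<^sub>R norm a - b /\<^sub>R norm b = (a - b) /\<^sub>R norm a + ((norm b - norm a) / (norm a * norm b)) *\<^sub>R b"
  proof -
    have c: "1 / norm a = 1 / norm b + (norm b - norm a) / (norm a * norm b)"
      using na by (simp add: field_simps)
    have "(1 / norm a) *\<^sub>R b = (1 / norm b) *\<^sub>R b + ((norm b - norm a) / (norm a * norm b)) *\<^sub>R b"
      by (subst c) (simp add: scaleR_add_left)
    then show ?thesis by (simp add: algebra_simps divide_inverse_commute)
  qed
  have "norm (((norm b - norm a) / (norm a * norm b)) *\<^sub>R b) = \<bar>norm b - norm a\<bar> / norm a"
    using na by (simp add: abs_div abs_mult)
  also have "\<dots> \<le> norm (a - b) / norm a"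
    using na norm_triangle_ineq3[of b a] by (simp add: divide_right_mono norm_minus_commute)
  finally have h: "norm (((norm b - norm a) / (norm a * norm b)) *\<^sub>R b) \<le> norm (a - b) / norm a" .
  have "norm (a /\<^sub>R norm a - b /\<^sub>R norm b) \<le> norm ((a - b) /\<^sub>R norm a) + norm (((norm b - norm a) / (norm a * norm b)) *\<^sub>R b)"
    unfolding eq by (rule norm_triangle_ineq)
  also have "\<dots> \<le> norm (a - b) / norm a + norm (a - b) / norm a"
  proof -
    have n1: "norm ((a - b) /\<^sub>R norm a) = norm (a - b) / norm a" using na by (simp add: divide_inverse_commute)
    show ?thesis using h n1 by linarith
  qed
  finally show ?thesis by simp
qed
lemma unit_lip:
  fixes Df :: "'a::euclidean_space \<Rightarrow> 'a" and D2f :: "'a \<Rightarrow> 'a \<Rightarrow>\<^sub>L 'a"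
  assumes hess: "\<And>x. (Df has_derivative blinfun_apply (D2f x)) (at x)"
    and cont: "continuous_on UNIV D2f"
    and K: "compact K" "K \<noteq> {}"
    and nz: "\<And>x. x \<in> K \<Longrightarrow> Df x \<noteq> 0"
  shows "\<exists>M\<ge>0. \<forall>x\<in>K. \<forall>y\<in>K. norm (Df x /\<^sub>R norm (Df x) - Df y /\<^sub>R norm (Df y)) \<le> M * norm (x - y)"
proof -
  obtain R where R0: "\<forall>x\<in>K. norm x \<le> R" using compact_imp_bounded[OF K(1)] unfolding bounded_iff by blast
  then have R: "K \<subseteq> cball 0 R" by auto
  have "compact (D2f ` cball 0 R)"
    by (rule compact_continuous_image[OF continuous_on_subset[OF cont]]) auto
  then have "bounded (D2f ` cball 0 R)" by (rule compact_imp_bounded)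
  then obtain B where B0: "\<forall>z\<in>D2f ` cball 0 R. norm z \<le> B" unfolding bounded_iff by blast
  then have B: "\<And>x. x \<in> cball 0 R \<Longrightarrow> norm (D2f x) \<le> B" by blast
  have lipD: "norm (Df x - Df y) \<le> B * norm (x - y)" if "x \<in> cball 0 R" "y \<in> cball 0 R" for x y
  proof (rule differentiable_bound[of "cball 0 R" Df "\<lambda>x. blinfun_apply (D2f x)" B])
    show "(Df has_derivative blinfun_apply (D2f z)) (at z within cball 0 R)" for z
      by (rule has_derivative_at_withinI[OF hess])
    show "onorm (blinfun_apply (D2f z)) \<le> B" if "z \<in> cball 0 R" for z
      using B[OF that] by (simp add: norm_blinfun.rep_eq)
  qed (use that in auto)
  have contDf: "continuous_on K Df"
    by (intro continuous_at_imp_continuous_on ballI has_derivative_continuous[OF hess])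
  then have "continuous_on K (\<lambda>x. norm (Df x))" by (intro continuous_intros)
  then obtain x1 where x1: "x1 \<in> K" "\<And>y. y \<in> K \<Longrightarrow> norm (Df x1) \<le> norm (Df y)"
  proof -
    have "compact ((\<lambda>x. norm (Df x)) ` K)"
      by (rule compact_continuous_image) fact+
    from compact_attains_inf[OF this] K(2) obtain v where "v \<in> (\<lambda>x. norm (Df x)) ` K" "\<forall>t\<in>(\<lambda>x. norm (Df x)) ` K. v \<le> t"
      by blast
    then show ?thesis using that by blast
  qed
  define m where "m = norm (Df x1)"
  have m: "m > 0" using nz x1 m_def by auto
  have "x1 \<in> cball 0 R" using x1(1) R by blast
  then have B0: "B \<ge> 0" using B[of x1] norm_ge_zero[of "D2f x1"] by linarith
  show ?thesis
  proof (intro exI[of _ "2 * B / m"] conjI ballI)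
    show "0 \<le> 2 * B / m" using B0 m by simp
    fix x y assume xy: "x \<in> K" "y \<in> K"
    have "norm (Df x /\<^sub>R norm (Df x) - Df y /\<^sub>R norm (Df y)) \<le> 2 * norm (Df x - Df y) / norm (Df x)"
      using normalize_lip nz xy by blast
    also have "\<dots> \<le> 2 * norm (Df x - Df y) / m"
    proof -
      have p1: "0 < m" "m \<le> norm (Df x)" using x1(2)[OF xy(1)] m m_def by auto
      have "0 \<le> 2 * norm (Df x - Df y)" by simp
      moreover have "0 < norm (Df x) * m" using p1 by (intro mult_pos_pos) linarith+
      ultimately show ?thesis using p1 by (intro divide_left_mono)
    qed
    also have "\<dots> \<le> 2 * (B * norm (x - y)) / m"
    proof -
      have "x \<in> cball 0 R" "y \<in> cball 0 R" using xy R by blast+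
      then have "norm (Df x - Df y) \<le> B * norm (x - y)" by (rule lipD)
      then show ?thesis using m by (simp add: divide_right_mono)
    qed
    finally show "norm (Df x /\<^sub>R norm (Df x) - Df y /\<^sub>R norm (Df y)) \<le> 2 * B / m * norm (x - y)" by (simp add: field_simps)
  qed
qed
theorem lemma5p4:
  fixes f g :: "real ^ 'n \<Rightarrow> real"
    and Df Dg :: "real ^ 'n \<Rightarrow> real ^ 'n"
    and D2f D2g :: "real ^ 'n \<Rightarrow> ((real ^ 'n) \<Rightarrow>\<^sub>L (real ^ 'n))"
    and x0 :: "real ^ 'n" and \<zeta> :: real
  assumes grad_f: "\<And>x. (f has_derivative (\<lambda>h. Df x \<bullet> h)) (at x)"
    and grad_g: "\<And>x. (g has_derivative (\<lambda>h. Dg x \<bullet> h)) (at x)"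
    and hess_f: "\<And>x. (Df has_derivative blinfun_apply (D2f x)) (at x)"
    and hess_g: "\<And>x. (Dg has_derivative blinfun_apply (D2g x)) (at x)"
    and cont_f: "continuous_on UNIV D2f"
    and cont_g: "continuous_on UNIV D2g"
    and A1: "filterlim f at_top at_infinity"
    and A2: "\<And>x. g x \<le> 0 \<Longrightarrow> Df x \<noteq> 0"
    and A3: "\<And>x. g x \<le> 0 \<Longrightarrow> Dg x \<noteq> 0"
    and x0: "g x0 \<le> 0"
    and bdd: "bounded (feasible_sublevel f g (f x0))"
    and ne: "feasible_sublevel f g (f x0) \<noteq> {}"
    and zeta: "\<zeta> \<in> {0..1}"
  shows "\<exists>L>0. \<forall>x\<in>feasible_sublevel f g (f x0). \<forall>y\<in>feasible_sublevel f g (f x0).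
           norm (s_field Df Dg \<zeta> x - s_field Df Dg \<zeta> y) \<le> L * norm (x - y)"
proof -
  define K where "K = feasible_sublevel f g (f x0)"
  have cf: "continuous_on UNIV f"
    by (intro continuous_at_imp_continuous_on ballI has_derivative_continuous[OF grad_f])
  have cg: "continuous_on UNIV g"
    by (intro continuous_at_imp_continuous_on ballI has_derivative_continuous[OF grad_g])
  have c1: "closed {x. f x \<le> f x0}" by (rule closed_Collect_le[OF cf continuous_on_const])
  have c2: "closed {x. g x \<le> 0}" by (rule closed_Collect_le[OF cg continuous_on_const])
  have "K = {x. f x \<le> f x0} \<inter> {x. g x \<le> 0}" unfolding K_def feasible_sublevel_def by auto
  then have "closed K" using c1 c2 by (simp add: closed_Int)
  then have cK: "compact K" using bdd K_def by (simp add: compact_eq_bounded_closed)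
  have neK: "K \<noteq> {}" using ne K_def by simp
  have gK: "\<And>x. x \<in> K \<Longrightarrow> g x \<le> 0" unfolding K_def feasible_sublevel_def by simp
  obtain Mf where Mf: "Mf \<ge> 0" "\<forall>x\<in>K. \<forall>y\<in>K. norm (Df x /\<^sub>R norm (Df x) - Df y /\<^sub>R norm (Df y)) \<le> Mf * norm (x - y)"
    using unit_lip[OF hess_f cont_f cK neK] A2 gK by blast
  obtain Mg where Mg: "Mg \<ge> 0" "\<forall>x\<in>K. \<forall>y\<in>K. norm (Dg x /\<^sub>R norm (Dg x) - Dg y /\<^sub>R norm (Dg y)) \<le> Mg * norm (x - y)"
    using unit_lip[OF hess_g cont_g cK neK] A3 gK by blast
  have z: "0 \<le> \<zeta>" "\<zeta> \<le> 1" using zeta by auto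
  show ?thesis unfolding K_def[symmetric]
  proof (intro exI[of _ "Mf + \<zeta> * Mg + 1"] conjI ballI)
    show "0 < Mf + \<zeta> * Mg + 1" using Mf Mg z by (smt (verit) mult_nonneg_nonneg)
    fix x y assume xy: "x \<in> K" "y \<in> K"
    define a where "a = Df x /\<^sub>R norm (Df x) - Df y /\<^sub>R norm (Df y)"
    define b where "b = Dg x /\<^sub>R norm (Dg x) - Dg y /\<^sub>R norm (Dg y)"
    have eq: "s_field Df Dg \<zeta> x - s_field Df Dg \<zeta> y = - a - \<zeta> *\<^sub>R b"
      unfolding s_field_def a_def b_def by (simp add: algebra_simps)
    have "norm (- a - \<zeta> *\<^sub>R b) \<le> norm a + \<zeta> * norm b"
      using norm_triangle_ineq4[of "-a" "\<zeta> *\<^sub>R b"] z by simp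
    also have "\<dots> \<le> Mf * norm (x - y) + \<zeta> * (Mg * norm (x - y))"
      using Mf(2) Mg(2) xy z unfolding a_def b_def by (intro add_mono mult_left_mono) auto
    also have "\<dots> \<le> (Mf + \<zeta> * Mg + 1) * norm (x - y)"
      by (simp add: algebra_simps)
    finally show "norm (s_field Df Dg \<zeta> x - s_field Df Dg \<zeta> y) \<le> (Mf + \<zeta> * Mg + 1) * norm (x - y)"
      unfolding eq .
  qed
qed

end
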